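(* Let $E$ be a finite ground set and let $\mathcal{F}\subseteq 2^E$ be a non-empty downward-closed family of feasible solutions, with unit weights (so the value of a set is its cardinality). Consider the robust counterpart $$\max_{S\in\mathcal{F}}\ \min_{f\in E\cup\{\emptyset\}}\ \max_{\substack{e\in (E\setminus(S\cup\{f\}))\cup\{\emptyset\}\\ (S\setminus\{f\})\cup\{e\}\in\mathcal{F}}} |(S\setminus\{f\})\cup\{e\}|.$$ Then there is a maximum-cardinality set $S\in\mathcal{F}$ that is an optimal first-stage solution of this robust counterpart. Furthermore, if some maximum-cardinality set $S\in\mathcal{F}$ is repairable, then $S$ is an optimal first-stage solution.
   Context: Downward-closed means: if $X\in\mathcal{F}$ and $X'\subseteq X$ then $X'\in\mathcal{F}$. In the robust counterpart, choosing $f=\emptyset$ means no element is deleted and choosing $e=\emptyset$ means no element is added. A set $S\in\mathcal{F}$ is called repairable if for every $f\in S$ there exists $e\in E\setminus S$ such that $(S\setminus\{f\})\cup\{e\}\in\mathcal{F}$. *)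

theory Defs
  imports Main
begin

(* "\<emptyset>" choices for f and e are modelled by None; an element x is Some x. *)

definition down_closed :: "'a set set \<Rightarrow> bool" where
  "down_closed F \<longleftrightarrow> (\<forall>X\<in>F. \<forall>X'. X' \<subseteq> X \<longrightarrow> X' \<in> F)"

definition choices :: "'a set \<Rightarrow> 'a option set" where
  "choices E = insert None (Some ` E)"

definition repair_val :: "'a set \<Rightarrow> 'a set set \<Rightarrow> 'a set \<Rightarrow> 'a option \<Rightarrow> nat" where
  "repair_val E F S f =
     Max { card ((S - set_option f) \<union> set_option e) | e.
             e \<in> choices (E - (S \<union> set_option f)) \<and>
             (S - set_option f) \<union> set_option e \<in> F }"

definition robust_val :: "'a set \<Rightarrow> 'a set set \<Rightarrow> 'a set \<Rightarrow> nat" where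
  "robust_val E F S = Min (repair_val E F S ` choices E)"

definition robust_optimal :: "'a set \<Rightarrow> 'a set set \<Rightarrow> 'a set \<Rightarrow> bool" where
  "robust_optimal E F S \<longleftrightarrow> S \<in> F \<and> (\<forall>T\<in>F. robust_val E F T \<le> robust_val E F S)"

definition max_card :: "'a set set \<Rightarrow> 'a set \<Rightarrow> bool" where
  "max_card F S \<longleftrightarrow> S \<in> F \<and> (\<forall>T\<in>F. card T \<le> card S)"

definition repairable :: "'a set \<Rightarrow> 'a set set \<Rightarrow> 'a set \<Rightarrow> bool" where
  "repairable E F S \<longleftrightarrow> S \<in> F \<and> (\<forall>f\<in>S. \<exists>e\<in>E - S. (S - {f}) \<union> {e} \<in> F)"

end

theory Submission
  imports Defs
begin

lemma choices_finite: "finite A \<Longrightarrow> finite (choices A)"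
  by (simp add: choices_def)

lemma rv_eq: "repair_val E F S f =
   Max ((\<lambda>e. card ((S - set_option f) \<union> set_option e)) `
        {e \<in> choices (E - (S \<union> set_option f)). (S - set_option f) \<union> set_option e \<in> F})"
  unfolding repair_val_def by (rule arg_cong[where f=Max]) auto

lemma rv_ge:
  assumes "finite E" "e \<in> choices (E - (S \<union> set_option f))"
    "(S - set_option f) \<union> set_option e \<in> F"
  shows "card ((S - set_option f) \<union> set_option e) \<le> repair_val E F S f"
proof -
  have "finite (choices (E - (S \<union> set_option f)))" using assms(1) by (simp add: choices_finite)
  then have "finite {e \<in> choices (E - (S \<union> set_option f)). (S - set_option f) \<union> set_option e \<in> F}"
    by simp
  then show ?thesis unfolding rv_eq
    by (intro Max_ge finite_imageI) (use assms in auto)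
qed

lemma rv_obtain:
  assumes "finite E" "S \<in> F" "down_closed F"
  shows "\<exists>e. e \<in> choices (E - (S \<union> set_option f)) \<and> (S - set_option f) \<union> set_option e \<in> F
     \<and> repair_val E F S f = card ((S - set_option f) \<union> set_option e)"
proof -
  let ?A = "{e \<in> choices (E - (S \<union> set_option f)). (S - set_option f) \<union> set_option e \<in> F}"
  have "None \<in> ?A" using assms unfolding down_closed_def choices_def by auto
  moreover have "finite (choices (E - (S \<union> set_option f)))" using assms(1) by (simp add: choices_finite)
  then have "finite ?A" by simp
  ultimately have "Max ((\<lambda>e. card ((S - set_option f) \<union> set_option e)) ` ?A)
      \<in> (\<lambda>e. card ((S - set_option f) \<union> set_option e)) ` ?A"
    by (intro Max_in) auto
  then show ?thesis unfolding rv_eq by auto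
qed

lemma rob_le: "finite E \<Longrightarrow> f \<in> choices E \<Longrightarrow> robust_val E F S \<le> repair_val E F S f"
  unfolding robust_val_def by (rule Min_le) (auto simp: choices_finite)

lemma rob_obtain: "finite E \<Longrightarrow> \<exists>f \<in> choices E. robust_val E F S = repair_val E F S f"
  unfolding robust_val_def
  by (metis (no_types, lifting) Min_in choices_def choices_finite empty_iff finite_imageI
       image_iff image_is_empty insert_iff)

theorem mainTheorem1:
  fixes E :: "'a set" and F :: "'a set set"
  assumes "finite E" and "F \<subseteq> Pow E" and "F \<noteq> {}" and "down_closed F"
  shows "(\<exists>S. max_card F S \<and> robust_optimal E F S) \<and>
         (\<forall>S. max_card F S \<and> repairable E F S \<longrightarrow> robust_optimal E F S)"
proof -
  have fE: "finite E" by fact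
  have finF: "finite F" using assms(1,2) by (meson finite_Pow_iff finite_subset)
  have finT: "\<And>T. T \<in> F \<Longrightarrow> finite T \<and> T \<subseteq> E" using assms(1,2) finite_subset by blast
  define M where "M = Max (card ` F)"
  have cardM: "\<And>T. T \<in> F \<Longrightarrow> card T \<le> M" unfolding M_def using finF by auto
  obtain S0 where S0: "S0 \<in> F" "card S0 = M" unfolding M_def using finF assms(3)
    by (metis (mono_tags, lifting) Max_in finite_imageI image_iff image_is_empty)
  have mcS0: "max_card F S0" using S0 cardM unfolding max_card_def by auto
  have ub: "robust_val E F T \<le> M" if TF: "T \<in> F" for T
  proof -
    obtain f where "robust_val E F T = repair_val E F T f" using rob_obtain[OF fE] by blast
    moreover obtain e where "(T - set_option f) \<union> set_option e \<in> F"
      "repair_val E F T f = card ((T - set_option f) \<union> set_option e)"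
      using rv_obtain[OF fE TF assms(4)] by blast
    ultimately show ?thesis using cardM by auto
  qed
  have lb: "card S - 1 \<le> robust_val E F S" if "S \<in> F" for S
  proof -
    obtain f where f: "f \<in> choices E" "robust_val E F S = repair_val E F S f"
      using rob_obtain[OF fE] by blast
    have "S - set_option f \<in> F" using that assms(4) unfolding down_closed_def by blast
    then have "card ((S - set_option f) \<union> set_option None) \<le> repair_val E F S f"
      by (intro rv_ge[OF fE]) (auto simp: choices_def)
    moreover have "card S - 1 \<le> card (S - set_option f)"
      using finT[OF that] by (cases f) (auto simp: card_Diff_singleton_if)
    ultimately show ?thesis using f by simp
  qed
  have rep: "card S \<le> robust_val E F S" if RS: "repairable E F S" for S
  proof -
    have SF: "S \<in> F" using that unfolding repairable_def by auto
    obtain f where f: "f \<in> choices E" "robust_val E F S = repair_val E F S f"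
      using rob_obtain[OF fE] by blast
    show ?thesis
    proof (cases "f = None \<or> (\<exists>x. f = Some x \<and> x \<notin> S)")
      case True
      then have eq: "S - set_option f = S" by auto
      have "card ((S - set_option f) \<union> set_option None) \<le> repair_val E F S f"
        by (intro rv_ge[OF fE]) (use SF eq in \<open>auto simp: choices_def\<close>)
      then show ?thesis using f eq by simp
    next
      case False
      then obtain x where x: "f = Some x" "x \<in> S" by (cases f) auto
      then obtain e where e: "e \<in> E - S" "(S - {x}) \<union> {e} \<in> F"
        using RS x unfolding repairable_def by blast
      have "card ((S - set_option f) \<union> set_option (Some e)) \<le> repair_val E F S f"
        by (intro rv_ge[OF fE]) (use x e in \<open>auto simp: choices_def\<close>)
      moreover have "card ((S - {x}) \<union> {e}) = card S"
      proof -
        have "card S > 0" using finT[OF SF] x by (auto simp: card_gt_0_iff)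
        then show ?thesis using finT[OF SF] x e by (simp add: card_Diff_singleton_if)
      qed
      ultimately show ?thesis using f x by simp
    qed
  qed
  have conv: "repairable E F T" if T: "T \<in> F" "T \<noteq> {}" "card T \<le> robust_val E F T" for T
    unfolding repairable_def
  proof (intro conjI ballI)
    show "T \<in> F" by fact
    fix x assume x: "x \<in> T"
    have "x \<in> E" using finT[OF T(1)] x by auto
    then have "robust_val E F T \<le> repair_val E F T (Some x)"
      by (intro rob_le[OF fE]) (auto simp: choices_def)
    moreover obtain e where e: "e \<in> choices (E - (T \<union> {x}))" "(T - {x}) \<union> set_option e \<in> F"
      "repair_val E F T (Some x) = card ((T - {x}) \<union> set_option e)"
      using rv_obtain[OF fE T(1) assms(4), of "Some x"] by auto
    ultimately have c: "card T \<le> card ((T - {x}) \<union> set_option e)" using T(3) by linarith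
    show "\<exists>e\<in>E - T. T - {x} \<union> {e} \<in> F"
    proof (cases e)
      case None
      then have "card ((T - {x}) \<union> set_option e) < card T"
      proof -
        have "card T > 0" using finT[OF T(1)] x by (auto simp: card_gt_0_iff)
        then show ?thesis using finT[OF T(1)] x None by simp
      qed
      then show ?thesis using c by linarith
    next
      case (Some a)
      then show ?thesis using e unfolding choices_def by auto
    qed
  qed
  have emp: "\<exists>S. max_card F S \<and> repairable E F S"
    if H: "1 \<le> M" "M \<le> robust_val E F {}" "{} \<in> F"
  proof -
    have "robust_val E F {} \<le> repair_val E F {} None"
      by (intro rob_le[OF fE]) (auto simp: choices_def)
    moreover obtain e where e: "e \<in> choices (E - {})" "set_option e \<in> F"
      "repair_val E F {} None = card (set_option e)"
      using rv_obtain[OF fE H(3) assms(4), of None] by auto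
    ultimately have ce: "1 \<le> card (set_option e)" using H by linarith
    then obtain a where a: "e = Some a" by (cases e) auto
    have aF: "{a} \<in> F" "a \<in> E" using e a unfolding choices_def by auto
    have M1: "M \<le> 1" using H \<open>robust_val E F {} \<le> repair_val E F {} None\<close> e a by simp
    have "robust_val E F {} \<le> repair_val E F {} (Some a)"
      by (intro rob_le[OF fE]) (use aF in \<open>auto simp: choices_def\<close>)
    moreover obtain e2 where e2: "e2 \<in> choices (E - {a})" "set_option e2 \<in> F"
      "repair_val E F {} (Some a) = card (set_option e2)"
      using rv_obtain[OF fE H(3) assms(4), of "Some a"] by auto
    ultimately have "1 \<le> card (set_option e2)" using H by linarith
    then obtain b where b: "e2 = Some b" by (cases e2) auto
    have bF: "{b} \<in> F" "b \<in> E" "b \<noteq> a" using e2 b unfolding choices_def by auto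
    have "max_card F {a}" using aF M1 cardM unfolding max_card_def by force
    moreover have "repairable E F {a}" unfolding repairable_def using aF bF by auto
    ultimately show ?thesis by blast
  qed
  have part2: "\<forall>S. max_card F S \<and> repairable E F S \<longrightarrow> robust_optimal E F S"
  proof (intro allI impI)
    fix S assume S: "max_card F S \<and> repairable E F S"
    then have "card S = M" using cardM S0 unfolding max_card_def by (meson le_antisym)
    then show "robust_optimal E F S" using rep[of S] S ub unfolding max_card_def robust_optimal_def
      by fastforce
  qed
  have part1: "\<exists>S. max_card F S \<and> robust_optimal E F S"
  proof (cases "\<exists>S. max_card F S \<and> repairable E F S")
    case True
    then show ?thesis using part2 by blast
  next
    case False
    have "robust_val E F T \<le> M - 1" if T: "T \<in> F" for T
    proof (rule ccontr)
      assume "\<not> robust_val E F T \<le> M - 1"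
      then have g: "M \<le> robust_val E F T" "1 \<le> M" using ub[OF T] by auto
      show False
      proof (cases "T = {}")
        case True
        then show ?thesis using emp g T False by blast
      next
        case ne: False
        then obtain x where x: "x \<in> T" by auto
        then have "x \<in> E" using finT[OF T] by auto
        then have "robust_val E F T \<le> repair_val E F T (Some x)"
          by (intro rob_le[OF fE]) (auto simp: choices_def)
        moreover obtain e where e: "repair_val E F T (Some x) = card ((T - {x}) \<union> set_option e)"
          using rv_obtain[OF fE T assms(4), of "Some x"] by auto
        moreover have "card ((T - {x}) \<union> set_option e) \<le> card T"
        proof -
          have "card ((T - {x}) \<union> set_option e) \<le> card (T - {x}) + card (set_option e)"
            by (rule card_Un_le)
          moreover have "card (set_option e) \<le> 1" by (cases e) auto
          moreover have "card (T - {x}) = card T - 1" using x finT[OF T] by simp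
          moreover have "card T \<ge> 1" using x finT[OF T] by (metis One_nat_def Suc_leI card_gt_0_iff empty_iff)
          ultimately show ?thesis by linarith
        qed
        ultimately have "card T = M" "card T \<le> robust_val E F T" using g cardM[OF T] by linarith+
        then have "max_card F T" "repairable E F T"
          using conv[OF T ne] T cardM unfolding max_card_def by auto
        then show False using False by blast
      qed
    qed
    then have "robust_optimal E F S0" using lb[OF S0(1)] S0 unfolding robust_optimal_def
      by (meson le_trans)
    then show ?thesis using mcS0 by blast
  qed
  show ?thesis using part1 part2 by blast
qed

end
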